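(* Let $(A,*,\{\cdot,\cdot,\cdot\})$ be a pre-Lie-Yamaguti algebra. Then: (i) the operations $[x,y]_C=x*y-y*x$ and $[\![x,y,z]\!]_C=\{x,y,z\}_D+\{x,y,z\}-\{y,x,z\}$ ($x,y,z\in A$) define a Lie-Yamaguti algebra structure on $A$ (the subadjacent Lie-Yamaguti algebra $A^c$); (ii) defining $L:A\to\mathfrak{gl}(A)$, $L_xz=x*z$, and $\mathcal R:\otimes^2A\to\mathfrak{gl}(A)$, $\mathcal R(x,y)z=\{z,x,y\}$, the triple $(A;L,\mathcal R)$ is a representation of $A^c$ on $A$, and the identity map $\mathrm{Id}:A\to A$ is a relative Rota-Baxter operator on $A^c$ with respect to $(A;L,\mathcal R)$.
   Context: All vector spaces are over a field of characteristic $0$. A pre-Lie-Yamaguti algebra is a vector space $A$ with a bilinear operation $*$ and a trilinear operation $\{\cdot,\cdot,\cdot\}$ such that, writing $[x,y]_C=x*y-y*x$, $(x,y,z)=(x*y)*z-x*(y*z)$ and $\{x,y,z\}_D=\{z,y,x\}-\{z,x,y\}+(y,x,z)-(x,y,z)$, for all $x,y,z,w,t\in A$: (P1) $\{z,[x,y]_C,w\}-\{y*z,x,w\}+\{x*z,y,w\}=0$; (P2) $\{x,y,[z,w]_C\}=z*\{x,y,w\}-w*\{x,y,z\}$; (P3) $\{\{x,y,z\},w,t\}-\{\{x,y,w\},z,t\}-\{x,y,\{z,w,t\}_D\}-\{x,y,\{z,w,t\}\}+\{x,y,\{w,z,t\}\}+\{z,w,\{x,y,t\}\}_D=0$; (P4)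 $\{z,\{x,y,w\}_D,t\}+\{z,\{x,y,w\},t\}-\{z,\{y,x,w\},t\}+\{z,w,\{x,y,t\}_D\}+\{z,w,\{x,y,t\}\}-\{z,w,\{y,x,t\}\}=\{x,y,\{z,w,t\}\}_D-\{\{x,y,z\}_D,w,t\}$; (P5) $\{x,y,z\}_D*w+\{x,y,z\}*w-\{y,x,z\}*w=\{x,y,z*w\}_D-z*\{x,y,w\}_D$. A Lie-Yamaguti algebra is a vector space $\mathfrak g$ with a bilinear skew-symmetric $[\cdot,\cdot]$ and a trilinear $[\![\cdot,\cdot,\cdot]\!]$ skew-symmetric in its first two arguments such that for all $x,y,z,w,t$: (1) $[[x,y],z]+[[y,z],x]+[[z,x],y]+[\![x,y,z]\!]+[\![y,z,x]\!]+[\![z,x,y]\!]=0$; (2) $[\![[x,y],z,w]\!]+[\![[y,z],x,w]\!]+[\![[z,x],y,w]\!]=0$; (3) $[\![x,y,[z,w]]\!]=[[\![x,y,z]\!],w]+[z,[\![x,y,w]\!]]$; (4) $[\![x,y,[\![z,w,t]\!]]\!]=[\![[\![x,y,z]\!],w,t]\!]+[\![z,[\![x,y,w]\!],t]\!]+[\![z,w,[\![x,y,t]\!]]\!]$. A representation $(V;\rho,\mu)$ of $\mathfrak g$ is a linear $\rho:\mathfrak g\to\mathfrak{gl}(V)$ and bilinear $\mu:\otimes^2\mathfrak g\to\mathfrak{gl}(V)$ such that, with $D_{\rho,\mu}(x,y):=\mu(y,x)-\mu(x,y)+[\rho(x),\rho(y)]-\rho([x,y])$: $\mu([x,y],z)-\mu(x,z)\rho(y)+\mu(y,z)\rho(x)=0$;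 $\mu(x,[y,z])-\rho(y)\mu(x,z)+\rho(z)\mu(x,y)=0$; $\rho([\![x,y,z]\!])=[D_{\rho,\mu}(x,y),\rho(z)]$; $\mu(z,w)\mu(x,y)-\mu(y,w)\mu(x,z)-\mu(x,[\![y,z,w]\!])+D_{\rho,\mu}(y,z)\mu(x,w)=0$; $\mu([\![x,y,z]\!],w)+\mu(z,[\![x,y,w]\!])=[D_{\rho,\mu}(x,y),\mu(z,w)]$. A relative Rota-Baxter operator on $\mathfrak g$ with respect to $(V;\rho,\mu)$ is a linear map $T:V\to\mathfrak g$ with $[Tu,Tv]=T(\rho(Tu)v-\rho(Tv)u)$ and $[\![Tu,Tv,Tw]\!]=T(D_{\rho,\mu}(Tu,Tv)w+\mu(Tv,Tw)u-\mu(Tu,Tw)v)$ for all $u,v,w\in V$. *)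

theory Defs
  imports Complex_Main
begin

definition bilinear_wrt :: "('k::field \<Rightarrow> 'a::ab_group_add \<Rightarrow> 'a) \<Rightarrow> ('a \<Rightarrow> 'a \<Rightarrow> 'a) \<Rightarrow> bool" where
  "bilinear_wrt s f \<longleftrightarrow> (\<forall>x. Vector_Spaces.linear s s (f x)) \<and> (\<forall>y. Vector_Spaces.linear s s (\<lambda>x. f x y))"

definition trilinear_wrt :: "('k::field \<Rightarrow> 'a::ab_group_add \<Rightarrow> 'a) \<Rightarrow> ('a \<Rightarrow> 'a \<Rightarrow> 'a \<Rightarrow> 'a) \<Rightarrow> bool" where
  "trilinear_wrt s f \<longleftrightarrow> (\<forall>x y. Vector_Spaces.linear s s (f x y)) \<and> (\<forall>x z. Vector_Spaces.linear s s (\<lambda>y. f x y z))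
      \<and> (\<forall>y z. Vector_Spaces.linear s s (\<lambda>x. f x y z))"

definition plyC :: "('a::ab_group_add \<Rightarrow> 'a \<Rightarrow> 'a) \<Rightarrow> 'a \<Rightarrow> 'a \<Rightarrow> 'a" where
  "plyC m x y = m x y - m y x"

definition plyAss :: "('a::ab_group_add \<Rightarrow> 'a \<Rightarrow> 'a) \<Rightarrow> 'a \<Rightarrow> 'a \<Rightarrow> 'a \<Rightarrow> 'a" where
  "plyAss m x y z = m (m x y) z - m x (m y z)"

definition plyD :: "('a::ab_group_add \<Rightarrow> 'a \<Rightarrow> 'a) \<Rightarrow> ('a \<Rightarrow> 'a \<Rightarrow> 'a \<Rightarrow> 'a) \<Rightarrow> 'a \<Rightarrow> 'a \<Rightarrow> 'a \<Rightarrow> 'a" where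
  "plyD m t x y z = t z y x - t z x y + plyAss m y x z - plyAss m x y z"

definition pre_lie_yamaguti ::
  "('k::field \<Rightarrow> 'a::ab_group_add \<Rightarrow> 'a) \<Rightarrow> ('a \<Rightarrow> 'a \<Rightarrow> 'a) \<Rightarrow> ('a \<Rightarrow> 'a \<Rightarrow> 'a \<Rightarrow> 'a) \<Rightarrow> bool" where
  "pre_lie_yamaguti s m t \<longleftrightarrow>
     vector_space s \<and> bilinear_wrt s m \<and> trilinear_wrt s t \<and>
     (\<forall>x y z w. t z (plyC m x y) w - t (m y z) x w + t (m x z) y w = 0) \<and>
     (\<forall>x y z w. t x y (plyC m z w) = m z (t x y w) - m w (t x y z)) \<and>
     (\<forall>x y z w u. t (t x y z) w u - t (t x y w) z u - t x y (plyD m t z w u) - t x y (t z w u)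
                  + t x y (t w z u) + plyD m t z w (t x y u) = 0) \<and>
     (\<forall>x y z w u. t z (plyD m t x y w) u + t z (t x y w) u - t z (t y x w) u
                  + t z w (plyD m t x y u) + t z w (t x y u) - t z w (t y x u)
                  = plyD m t x y (t z w u) - t (plyD m t x y z) w u) \<and>
     (\<forall>x y z w. m (plyD m t x y z) w + m (t x y z) w - m (t y x z) w
                  = plyD m t x y (m z w) - m z (plyD m t x y w))"

definition lie_yamaguti ::
  "('k::field \<Rightarrow> 'g::ab_group_add \<Rightarrow> 'g) \<Rightarrow> ('g \<Rightarrow> 'g \<Rightarrow> 'g) \<Rightarrow> ('g \<Rightarrow> 'g \<Rightarrow> 'g \<Rightarrow> 'g) \<Rightarrow> bool" where
  "lie_yamaguti s b t \<longleftrightarrow>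
     vector_space s \<and> bilinear_wrt s b \<and> trilinear_wrt s t \<and>
     (\<forall>x y. b x y = - b y x) \<and> (\<forall>x y z. t x y z = - t y x z) \<and>
     (\<forall>x y z. b (b x y) z + b (b y z) x + b (b z x) y + t x y z + t y z x + t z x y = 0) \<and>
     (\<forall>x y z w. t (b x y) z w + t (b y z) x w + t (b z x) y w = 0) \<and>
     (\<forall>x y z w. t x y (b z w) = b (t x y z) w + b z (t x y w)) \<and>
     (\<forall>x y z w u. t x y (t z w u) = t (t x y z) w u + t z (t x y w) u + t z w (t x y u))"

definition repD ::
  "('g \<Rightarrow> 'g \<Rightarrow> 'g) \<Rightarrow> ('g \<Rightarrow> 'v \<Rightarrow> 'v) \<Rightarrow> ('g \<Rightarrow> 'g \<Rightarrow> 'v \<Rightarrow> 'v) \<Rightarrow> 'g \<Rightarrow> 'g \<Rightarrow> 'v \<Rightarrow> 'v::ab_group_add" where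
  "repD b \<rho> \<mu> x y v = \<mu> y x v - \<mu> x y v + (\<rho> x (\<rho> y v) - \<rho> y (\<rho> x v)) - \<rho> (b x y) v"

definition ly_rep ::
  "('k::field \<Rightarrow> 'g::ab_group_add \<Rightarrow> 'g) \<Rightarrow> ('g \<Rightarrow> 'g \<Rightarrow> 'g) \<Rightarrow> ('g \<Rightarrow> 'g \<Rightarrow> 'g \<Rightarrow> 'g) \<Rightarrow>
   ('k \<Rightarrow> 'v::ab_group_add \<Rightarrow> 'v) \<Rightarrow> ('g \<Rightarrow> 'v \<Rightarrow> 'v) \<Rightarrow> ('g \<Rightarrow> 'g \<Rightarrow> 'v \<Rightarrow> 'v) \<Rightarrow> bool" where
  "ly_rep sg b t sv \<rho> \<mu> \<longleftrightarrow>
     vector_space sv \<and>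
     (\<forall>x. Vector_Spaces.linear sv sv (\<rho> x)) \<and> (\<forall>v. Vector_Spaces.linear sg sv (\<lambda>x. \<rho> x v)) \<and>
     (\<forall>x y. Vector_Spaces.linear sv sv (\<mu> x y)) \<and> (\<forall>y v. Vector_Spaces.linear sg sv (\<lambda>x. \<mu> x y v)) \<and>
     (\<forall>x v. Vector_Spaces.linear sg sv (\<lambda>y. \<mu> x y v)) \<and>
     (\<forall>x y z v. \<mu> (b x y) z v - \<mu> x z (\<rho> y v) + \<mu> y z (\<rho> x v) = 0) \<and>
     (\<forall>x y z v. \<mu> x (b y z) v - \<rho> y (\<mu> x z v) + \<rho> z (\<mu> x y v) = 0) \<and>
     (\<forall>x y z v. \<rho> (t x y z) v = repD b \<rho> \<mu> x y (\<rho> z v) - \<rho> z (repD b \<rho> \<mu> x y v)) \<and>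
     (\<forall>x y z w v. \<mu> z w (\<mu> x y v) - \<mu> y w (\<mu> x z v) - \<mu> x (t y z w) v
                   + repD b \<rho> \<mu> y z (\<mu> x w v) = 0) \<and>
     (\<forall>x y z w v. \<mu> (t x y z) w v + \<mu> z (t x y w) v
                   = repD b \<rho> \<mu> x y (\<mu> z w v) - \<mu> z w (repD b \<rho> \<mu> x y v))"

definition relative_rb ::
  "('k::field \<Rightarrow> 'g::ab_group_add \<Rightarrow> 'g) \<Rightarrow> ('g \<Rightarrow> 'g \<Rightarrow> 'g) \<Rightarrow> ('g \<Rightarrow> 'g \<Rightarrow> 'g \<Rightarrow> 'g) \<Rightarrow>
   ('k \<Rightarrow> 'v::ab_group_add \<Rightarrow> 'v) \<Rightarrow> ('g \<Rightarrow> 'v \<Rightarrow> 'v) \<Rightarrow> ('g \<Rightarrow> 'g \<Rightarrow> 'v \<Rightarrow> 'v) \<Rightarrow> ('v \<Rightarrow> 'g) \<Rightarrow> bool" where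
  "relative_rb sg b t sv \<rho> \<mu> T \<longleftrightarrow>
     Vector_Spaces.linear sv sg T \<and>
     (\<forall>u v. b (T u) (T v) = T (\<rho> (T u) v - \<rho> (T v) u)) \<and>
     (\<forall>u v w. t (T u) (T v) (T w) =
        T (repD b \<rho> \<mu> (T u) (T v) w + \<mu> (T v) (T w) u - \<mu> (T u) (T w) v))"

definition plyLY :: "('a::ab_group_add \<Rightarrow> 'a \<Rightarrow> 'a) \<Rightarrow> ('a \<Rightarrow> 'a \<Rightarrow> 'a \<Rightarrow> 'a) \<Rightarrow> 'a \<Rightarrow> 'a \<Rightarrow> 'a \<Rightarrow> 'a" where
  "plyLY m t x y z = plyD m t x y z + t x y z - t y x z"

end

theory Submission
  imports Defs
begin

lemma linI:
  assumes "vector_space s" "\<And>x y. f (x + y) = f x + f y" "\<And>c x. f (s c x) = s c (f x)"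
  shows "Vector_Spaces.linear s s f"
  using assms unfolding module_hom_iff_linear[symmetric] module_hom_iff module_iff_vector_space by blast

locale plyA =
  fixes s :: "'k::field_char_0 \<Rightarrow> 'a::ab_group_add \<Rightarrow> 'a"
    and m :: "'a \<Rightarrow> 'a \<Rightarrow> 'a"
    and t :: "'a \<Rightarrow> 'a \<Rightarrow> 'a \<Rightarrow> 'a"
  assumes ply: "pre_lie_yamaguti s m t"
begin

lemma vs: "vector_space s" using ply unfolding pre_lie_yamaguti_def by blast
lemma md: "module s" using vs module_iff_vector_space by blast

lemma hm1: "module_hom s s (m x)" and hm2: "module_hom s s (\<lambda>x. m x y)"
  and ht1: "module_hom s s (t x y)" and ht2: "module_hom s s (\<lambda>y. t x y z)"
  and ht3: "module_hom s s (\<lambda>x. t x y z)"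
  using ply by (simp_all add: pre_lie_yamaguti_def bilinear_wrt_def trilinear_wrt_def module_hom_iff_linear)

lemma ml:
  "m x (a + b) = m x a + m x b" "m x (a - b) = m x a - m x b" "m x (- a) = - m x a" "m x 0 = 0"
  "m (a + b) y = m a y + m b y" "m (a - b) y = m a y - m b y" "m (- a) y = - m a y" "m 0 y = 0"
  "t x y (a + b) = t x y a + t x y b" "t x y (a - b) = t x y a - t x y b" "t x y (- a) = - t x y a" "t x y 0 = 0"
  "t x (a + b) z = t x a z + t x b z" "t x (a - b) z = t x a z - t x b z" "t x (- a) z = - t x a z" "t x 0 z = 0"
  "t (a + b) y z = t a y z + t b y z" "t (a - b) y z = t a y z - t b y z" "t (- a) y z = - t a y z" "t 0 y z = 0"
  using module_hom.add[OF hm1] module_hom.diff[OF hm1] module_hom.neg[OF hm1] module_hom.zero[OF hm1]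
    module_hom.add[OF hm2] module_hom.diff[OF hm2] module_hom.neg[OF hm2] module_hom.zero[OF hm2]
    module_hom.add[OF ht1] module_hom.diff[OF ht1] module_hom.neg[OF ht1] module_hom.zero[OF ht1]
    module_hom.add[OF ht2] module_hom.diff[OF ht2] module_hom.neg[OF ht2] module_hom.zero[OF ht2]
    module_hom.add[OF ht3] module_hom.diff[OF ht3] module_hom.neg[OF ht3] module_hom.zero[OF ht3]
  by auto

lemma msc:
  "m x (s c a) = s c (m x a)" "m (s c a) y = s c (m a y)"
  "t x y (s c a) = s c (t x y a)" "t x (s c a) z = s c (t x a z)" "t (s c a) y z = s c (t a y z)"
  using module_hom.scale[OF hm1] module_hom.scale[OF hm2] module_hom.scale[OF ht1]
    module_hom.scale[OF ht2] module_hom.scale[OF ht3] by auto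

lemmas ssc = module.scale_right_distrib[OF md] module.scale_right_diff_distrib[OF md]
  module.scale_minus_right[OF md]

lemmas dfs = plyLY_def plyD_def plyAss_def plyC_def

lemma ax1: "t z (plyC m x y) w - t (m y z) x w + t (m x z) y w = 0"
  by (rule ply[unfolded pre_lie_yamaguti_def, THEN conjunct2, THEN conjunct2, THEN conjunct2, THEN conjunct1, rule_format])
lemma ax2: "t x y (plyC m z w) = m z (t x y w) - m w (t x y z)"
  by (rule ply[unfolded pre_lie_yamaguti_def, THEN conjunct2, THEN conjunct2, THEN conjunct2, THEN conjunct2, THEN conjunct1, rule_format])
lemma ax3: "t (t x y z) w u - t (t x y w) z u - t x y (plyD m t z w u) - t x y (t z w u)
                  + t x y (t w z u) + plyD m t z w (t x y u) = 0"
  by (rule ply[unfolded pre_lie_yamaguti_def, THEN conjunct2, THEN conjunct2, THEN conjunct2, THEN conjunct2, THEN conjunct2, THEN conjunct1, rule_format])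
lemma ax4: "t z (plyD m t x y w) u + t z (t x y w) u - t z (t y x w) u
                  + t z w (plyD m t x y u) + t z w (t x y u) - t z w (t y x u)
                  = plyD m t x y (t z w u) - t (plyD m t x y z) w u"
  by (rule ply[unfolded pre_lie_yamaguti_def, THEN conjunct2, THEN conjunct2, THEN conjunct2, THEN conjunct2, THEN conjunct2, THEN conjunct2, THEN conjunct1, rule_format])
lemma ax5: "m (plyD m t x y z) w + m (t x y z) w - m (t y x z) w
                  = plyD m t x y (m z w) - m z (plyD m t x y w)"
  by (rule ply[unfolded pre_lie_yamaguti_def, THEN conjunct2, THEN conjunct2, THEN conjunct2, THEN conjunct2, THEN conjunct2, THEN conjunct2, THEN conjunct2, rule_format])

lemma bilC: "bilinear_wrt s (plyC m)"
  unfolding bilinear_wrt_def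
  by (auto intro!: linI vs simp: dfs ml msc ssc algebra_simps)

lemma triLY: "trilinear_wrt s (plyLY m t)"
  unfolding trilinear_wrt_def
  by (auto intro!: linI vs simp: dfs ml msc ssc algebra_simps)

lemma LY2: "plyLY m t (plyC m x y) z w + plyLY m t (plyC m y z) x w + plyLY m t (plyC m z x) y w = 0"
proof -
  have g0: "(t y (plyC m x z) w - t (m z y) x w + t (m x y) z w) = 0" by (simp only: ax1[where x="x" and y="z" and z="y" and w="w"] diff_self ml)
  have g1: "(t z (plyC m x y) w - t (m y z) x w + t (m x z) y w) = 0" by (simp only: ax1[where x="x" and y="y" and z="z" and w="w"] diff_self ml)
  have g2: "(t x (plyC m y z) w - t (m z x) y w + t (m y x) z w) = 0" by (simp only: ax1[where x="y" and y="z" and z="x" and w="w"] diff_self ml)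
  have g3: "((m (plyD m t y z x) w + m (t y z x) w - m (t z y x) w) - (plyD m t y z (m x w) - m x (plyD m t y z w))) = 0" by (simp only: ax5[where x="y" and y="z" and z="x" and w="w"] diff_self ml)
  have g4: "((m (plyD m t x z y) w + m (t x z y) w - m (t z x y) w) - (plyD m t x z (m y w) - m y (plyD m t x z w))) = 0" by (simp only: ax5[where x="x" and y="z" and z="y" and w="w"] diff_self ml)
  have g5: "((m (plyD m t x y z) w + m (t x y z) w - m (t y x z) w) - (plyD m t x y (m z w) - m z (plyD m t x y w))) = 0" by (simp only: ax5[where x="x" and y="y" and z="z" and w="w"] diff_self ml)
  have g6: "((t w z (plyC m x y)) - (m x (t w z y) - m y (t w z x))) = 0" by (simp only: ax2[where x="w" and y="z" and z="x" and w="y"] diff_self ml)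
  have g7: "((t w y (plyC m x z)) - (m x (t w y z) - m z (t w y x))) = 0" by (simp only: ax2[where x="w" and y="y" and z="x" and w="z"] diff_self ml)
  have g8: "((t w x (plyC m y z)) - (m y (t w x z) - m z (t w x y))) = 0" by (simp only: ax2[where x="w" and y="x" and z="y" and w="z"] diff_self ml)
  have g9: "(t w (plyC m y z) x - t (m z w) y x + t (m y w) z x) = 0" by (simp only: ax1[where x="y" and y="z" and z="w" and w="x"] diff_self ml)
  have g10: "(t w (plyC m x z) y - t (m z w) x y + t (m x w) z y) = 0" by (simp only: ax1[where x="x" and y="z" and z="w" and w="y"] diff_self ml)
  have g11: "(t w (plyC m x y) z - t (m y w) x z + t (m x w) y z) = 0" by (simp only: ax1[where x="x" and y="y" and z="w" and w="z"] diff_self ml)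
  have s0: "(t y (plyC m x z) w - t (m z y) x w + t (m x y) z w) - (t z (plyC m x y) w - t (m y z) x w + t (m x z) y w) - (t x (plyC m y z) w - t (m z x) y w + t (m y x) z w) + ((m (plyD m t y z x) w + m (t y z x) w - m (t z y x) w) - (plyD m t y z (m x w) - m x (plyD m t y z w))) - ((m (plyD m t x z y) w + m (t x z y) w - m (t z x y) w) - (plyD m t x z (m y w) - m y (plyD m t x z w))) + ((m (plyD m t x y z) w + m (t x y z) w - m (t y x z) w) - (plyD m t x y (m z w) - m z (plyD m t x y w))) + ((t w z (plyC m x y)) - (m x (t w z y) - m y (t w z x))) - ((t w y (plyC m x z)) - (m x (t w y z) - m z (t w y x))) + ((t w x (plyC m y z)) - (m y (t w x z) - m z (t w x y))) - (t w (plyC m y z) x - t (m z w) y x + t (m y w) z x) + (t w (plyC m x z) y - t (m z w) x y + t (m x w) z y) - (t w (plyC m x y) z - t (m y w) x z + t (m x w) y z) = 0" by (simp only: g0 g1 g2 g3 g4 g5 g6 g7 g8 g9 g10 g11 add_0_left add_0_right diff_0_right diff_0 minus_zero)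
  have "(plyLY m t (plyC m x y) z w + plyLY m t (plyC m y z) x w + plyLY m t (plyC m z x) y w) - (0) = (t y (plyC m x z) w - t (m z y) x w + t (m x y) z w) - (t z (plyC m x y) w - t (m y z) x w + t (m x z) y w) - (t x (plyC m y z) w - t (m z x) y w + t (m y x) z w) + ((m (plyD m t y z x) w + m (t y z x) w - m (t z y x) w) - (plyD m t y z (m x w) - m x (plyD m t y z w))) - ((m (plyD m t x z y) w + m (t x z y) w - m (t z x y) w) - (plyD m t x z (m y w) - m y (plyD m t x z w))) + ((m (plyD m t x y z) w + m (t x y z) w - m (t y x z) w) - (plyD m t x y (m z w) - m z (plyD m t x y w))) + ((t w z (plyC m x y)) - (m x (t w z y) - m y (t w z x))) - ((t w y (plyC m x z)) - (m x (t w y z) - m z (t w y x))) + ((t w x (plyC m y z)) - (m y (t w x z) - m z (t w x y))) - (t w (plyC m y z) x - t (m z w) y x + t (m y w) z x) + (t w (plyC m x z) y - t (m z w) x y + t (m x w) z y) - (t w (plyC m x y) z - t (m y w) x z + t (m x w) y z)" by (simp add: dfs ml algebra_simps)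
  then show ?thesis using s0 by simp
qed
lemma LY3: "plyLY m t x y (plyC m z w) = plyC m (plyLY m t x y z) w + plyC m z (plyLY m t x y w)"
proof -
  have g0: "((m (plyD m t x y w) z + m (t x y w) z - m (t y x w) z) - (plyD m t x y (m w z) - m w (plyD m t x y z))) = 0" by (simp only: ax5[where x="x" and y="y" and z="w" and w="z"] diff_self ml)
  have g1: "((t y x (plyC m z w)) - (m z (t y x w) - m w (t y x z))) = 0" by (simp only: ax2[where x="y" and y="x" and z="z" and w="w"] diff_self ml)
  have g2: "((t x y (plyC m z w)) - (m z (t x y w) - m w (t x y z))) = 0" by (simp only: ax2[where x="x" and y="y" and z="z" and w="w"] diff_self ml)
  have g3: "((m (plyD m t x y z) w + m (t x y z) w - m (t y x z) w) - (plyD m t x y (m z w) - m z (plyD m t x y w))) = 0" by (simp only: ax5[where x="x" and y="y" and z="z" and w="w"] diff_self ml)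
  have s0: "((m (plyD m t x y w) z + m (t x y w) z - m (t y x w) z) - (plyD m t x y (m w z) - m w (plyD m t x y z))) - ((t y x (plyC m z w)) - (m z (t y x w) - m w (t y x z))) + ((t x y (plyC m z w)) - (m z (t x y w) - m w (t x y z))) - ((m (plyD m t x y z) w + m (t x y z) w - m (t y x z) w) - (plyD m t x y (m z w) - m z (plyD m t x y w))) = 0" by (simp only: g0 g1 g2 g3 add_0_left add_0_right diff_0_right diff_0 minus_zero)
  have "(plyLY m t x y (plyC m z w)) - (plyC m (plyLY m t x y z) w + plyC m z (plyLY m t x y w)) = ((m (plyD m t x y w) z + m (t x y w) z - m (t y x w) z) - (plyD m t x y (m w z) - m w (plyD m t x y z))) - ((t y x (plyC m z w)) - (m z (t y x w) - m w (t y x z))) + ((t x y (plyC m z w)) - (m z (t x y w) - m w (t x y z))) - ((m (plyD m t x y z) w + m (t x y z) w - m (t y x z) w) - (plyD m t x y (m z w) - m z (plyD m t x y w)))" by (simp add: dfs ml algebra_simps)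
  then show ?thesis using s0 by simp
qed
lemma LY4: "plyLY m t x y (plyLY m t z w u) = plyLY m t (plyLY m t x y z) w u + plyLY m t z (plyLY m t x y w) u + plyLY m t z w (plyLY m t x y u)"
proof -
  have g0: "((t w (plyD m t x y z) u + t w (t x y z) u - t w (t y x z) u + t w z (plyD m t x y u) + t w z (t x y u) - t w z (t y x u)) - (plyD m t x y (t w z u) - t (plyD m t x y w) z u)) = 0" by (simp only: ax4[where x="x" and y="y" and z="w" and w="z" and u="u"] diff_self ml)
  have g1: "((t z (plyD m t x y w) u + t z (t x y w) u - t z (t y x w) u + t z w (plyD m t x y u) + t z w (t x y u) - t z w (t y x u)) - (plyD m t x y (t z w u) - t (plyD m t x y z) w u)) = 0" by (simp only: ax4[where x="x" and y="y" and z="z" and w="w" and u="u"] diff_self ml)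
  have g2: "(t (t y x z) w u - t (t y x w) z u - t y x (plyD m t z w u) - t y x (t z w u) + t y x (t w z u) + plyD m t z w (t y x u)) = 0" by (simp only: ax3[where x="y" and y="x" and z="z" and w="w" and u="u"] diff_self ml)
  have g3: "(t (t x y z) w u - t (t x y w) z u - t x y (plyD m t z w u) - t x y (t z w u) + t x y (t w z u) + plyD m t z w (t x y u)) = 0" by (simp only: ax3[where x="x" and y="y" and z="z" and w="w" and u="u"] diff_self ml)
  have g4: "((m (plyD m t x y z) (m w u) + m (t x y z) (m w u) - m (t y x z) (m w u)) - (plyD m t x y (m z (m w u)) - m z (plyD m t x y (m w u)))) = 0" by (simp only: ax5[where x="x" and y="y" and z="z" and w="m w u"] diff_self ml)
  have g5: "m z (((m (plyD m t x y w) u + m (t x y w) u - m (t y x w) u) - (plyD m t x y (m w u) - m w (plyD m t x y u)))) = 0" by (simp only: ax5[where x="x" and y="y" and z="w" and w="u"] diff_self ml)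
  have g6: "((m (plyD m t x y (m w z)) u + m (t x y (m w z)) u - m (t y x (m w z)) u) - (plyD m t x y (m (m w z) u) - m (m w z) (plyD m t x y u))) = 0" by (simp only: ax5[where x="x" and y="y" and z="m w z" and w="u"] diff_self ml)
  have g7: "m (((m (plyD m t x y w) z + m (t x y w) z - m (t y x w) z) - (plyD m t x y (m w z) - m w (plyD m t x y z)))) u = 0" by (simp only: ax5[where x="x" and y="y" and z="w" and w="z"] diff_self ml)
  have g8: "m (((t y x (plyC m z w)) - (m z (t y x w) - m w (t y x z)))) u = 0" by (simp only: ax2[where x="y" and y="x" and z="z" and w="w"] diff_self ml)
  have g9: "((m (plyD m t x y (m z w)) u + m (t x y (m z w)) u - m (t y x (m z w)) u) - (plyD m t x y (m (m z w) u) - m (m z w) (plyD m t x y u))) = 0" by (simp only: ax5[where x="x" and y="y" and z="m z w" and w="u"] diff_self ml)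
  have g10: "m (((m (plyD m t x y z) w + m (t x y z) w - m (t y x z) w) - (plyD m t x y (m z w) - m z (plyD m t x y w)))) u = 0" by (simp only: ax5[where x="x" and y="y" and z="z" and w="w"] diff_self ml)
  have g11: "m (((t x y (plyC m z w)) - (m z (t x y w) - m w (t x y z)))) u = 0" by (simp only: ax2[where x="x" and y="y" and z="z" and w="w"] diff_self ml)
  have g12: "((m (plyD m t x y w) (m z u) + m (t x y w) (m z u) - m (t y x w) (m z u)) - (plyD m t x y (m w (m z u)) - m w (plyD m t x y (m z u)))) = 0" by (simp only: ax5[where x="x" and y="y" and z="w" and w="m z u"] diff_self ml)
  have g13: "m w (((m (plyD m t x y z) u + m (t x y z) u - m (t y x z) u) - (plyD m t x y (m z u) - m z (plyD m t x y u)))) = 0" by (simp only: ax5[where x="x" and y="y" and z="z" and w="u"] diff_self ml)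
  have g14: "((t u (plyD m t x y z) w + t u (t x y z) w - t u (t y x z) w + t u z (plyD m t x y w) + t u z (t x y w) - t u z (t y x w)) - (plyD m t x y (t u z w) - t (plyD m t x y u) z w)) = 0" by (simp only: ax4[where x="x" and y="y" and z="u" and w="z" and u="w"] diff_self ml)
  have g15: "((t u (plyD m t x y w) z + t u (t x y w) z - t u (t y x w) z + t u w (plyD m t x y z) + t u w (t x y z) - t u w (t y x z)) - (plyD m t x y (t u w z) - t (plyD m t x y u) w z)) = 0" by (simp only: ax4[where x="x" and y="y" and z="u" and w="w" and u="z"] diff_self ml)
  have s0: "((t w (plyD m t x y z) u + t w (t x y z) u - t w (t y x z) u + t w z (plyD m t x y u) + t w z (t x y u) - t w z (t y x u)) - (plyD m t x y (t w z u) - t (plyD m t x y w) z u)) - ((t z (plyD m t x y w) u + t z (t x y w) u - t z (t y x w) u + t z w (plyD m t x y u) + t z w (t x y u) - t z w (t y x u)) - (plyD m t x y (t z w u) - t (plyD m t x y z) w u)) + (t (t y x z) w u - t (t y x w) z u - t y x (plyD m t z w u) - t y x (t z w u) + t y x (t w z u) + plyD m t z w (t y x u)) - (t (t x y z) w u - t (t x y w) z u - t x y (plyD m t z w u) - t x y (t z w u) + t x y (t w z u) + plyD m t z w (t x y u)) - ((m (plyD m t x y z) (m w u) + m (t x y z) (m w u) - m (t y x z) (m w u)) - (plyD m t x y (m z (m w u)) - m z (plyD m t x y (m w u)))) - m z (((m (plyD m t x y w) u + m (t x y w) u - m (t y x w) u) - (plyD m t x y (m w u) - m w (plyD m t x y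 u)))) - ((m (plyD m t x y (m w z)) u + m (t x y (m w z)) u - m (t y x (m w z)) u) - (plyD m t x y (m (m w z) u) - m (m w z) (plyD m t x y u))) - m (((m (plyD m t x y w) z + m (t x y w) z - m (t y x w) z) - (plyD m t x y (m w z) - m w (plyD m t x y z)))) u + m (((t y x (plyC m z w)) - (m z (t y x w) - m w (t y x z)))) u + ((m (plyD m t x y (m z w)) u + m (t x y (m z w)) u - m (t y x (m z w)) u) - (plyD m t x y (m (m z w) u) - m (m z w) (plyD m t x y u))) + m (((m (plyD m t x y z) w + m (t x y z) w - m (t y x z) w) - (plyD m t x y (m z w) - m z (plyD m t x y w)))) u - m (((t x y (plyC m z w)) - (m z (t x y w) - m w (t x y z)))) u + ((m (plyD m t x y w) (m z u) + m (t x y w) (m z u) - m (t y x w) (m z u)) - (plyD m t x y (m w (m z u)) - m w (plyD m t x y (m z u)))) + m w (((m (plyD m t x y z) u + m (t x y z) u - m (t y x z) u) - (plyD m t x y (m z u) - m z (plyD m t x y u)))) + ((t u (plyD m t x y z) w + t u (t x y z) w - t u (t y x z) w + t u z (plyD m t x y w) + t u z (t x y w) - t u z (t y x w)) - (plyD m t x y (t u z w) - t (plyD m t x y u) z w)) - ((t u (plyD m t x y w) z + t u (t x y w) z - t u (t y x w) z + t u w (plyD m t x y z) + t u w (t x y z) - t u w (t y x z)) - (plyD m t x y (t u w z) - t (plyD m t x y u) w z)) = 0" by (simp only: g0 g1 g2 g3 g4 g5 g6 g7 g8 g9 g10 g11 g12 g13 g14 g15 add_0_left add_0_right diff_0_right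 diff_0 minus_zero)
  have "(plyLY m t x y (plyLY m t z w u)) - (plyLY m t (plyLY m t x y z) w u + plyLY m t z (plyLY m t x y w) u + plyLY m t z w (plyLY m t x y u)) = ((t w (plyD m t x y z) u + t w (t x y z) u - t w (t y x z) u + t w z (plyD m t x y u) + t w z (t x y u) - t w z (t y x u)) - (plyD m t x y (t w z u) - t (plyD m t x y w) z u)) - ((t z (plyD m t x y w) u + t z (t x y w) u - t z (t y x w) u + t z w (plyD m t x y u) + t z w (t x y u) - t z w (t y x u)) - (plyD m t x y (t z w u) - t (plyD m t x y z) w u)) + (t (t y x z) w u - t (t y x w) z u - t y x (plyD m t z w u) - t y x (t z w u) + t y x (t w z u) + plyD m t z w (t y x u)) - (t (t x y z) w u - t (t x y w) z u - t x y (plyD m t z w u) - t x y (t z w u) + t x y (t w z u) + plyD m t z w (t x y u)) - ((m (plyD m t x y z) (m w u) + m (t x y z) (m w u) - m (t y x z) (m w u)) - (plyD m t x y (m z (m w u)) - m z (plyD m t x y (m w u)))) - m z (((m (plyD m t x y w) u + m (t x y w) u - m (t y x w) u) - (plyD m t x y (m w u) - m w (plyD m t x y u)))) - ((m (plyD m t x y (m w z)) u + m (t x y (m w z)) u - m (t y x (m w z)) u) - (plyD m t x y (m (m w z) u) - m (m w z) (plyD m t x y u))) - m (((m (plyD m t x y w) z + m (t x y w) z - m (t y x w) z) - (plyD m t x y (m w z) - m w (plyD m t x y z)))) u + m (((t y x (plyC m z w)) - (m z (t y x w) - m w (t y x z)))) u + ((m (plyD m t x y (m z w)) u + m (t x y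 (m z w)) u - m (t y x (m z w)) u) - (plyD m t x y (m (m z w) u) - m (m z w) (plyD m t x y u))) + m (((m (plyD m t x y z) w + m (t x y z) w - m (t y x z) w) - (plyD m t x y (m z w) - m z (plyD m t x y w)))) u - m (((t x y (plyC m z w)) - (m z (t x y w) - m w (t x y z)))) u + ((m (plyD m t x y w) (m z u) + m (t x y w) (m z u) - m (t y x w) (m z u)) - (plyD m t x y (m w (m z u)) - m w (plyD m t x y (m z u)))) + m w (((m (plyD m t x y z) u + m (t x y z) u - m (t y x z) u) - (plyD m t x y (m z u) - m z (plyD m t x y u)))) + ((t u (plyD m t x y z) w + t u (t x y z) w - t u (t y x z) w + t u z (plyD m t x y w) + t u z (t x y w) - t u z (t y x w)) - (plyD m t x y (t u z w) - t (plyD m t x y u) z w)) - ((t u (plyD m t x y w) z + t u (t x y w) z - t u (t y x w) z + t u w (plyD m t x y z) + t u w (t x y z) - t u w (t y x z)) - (plyD m t x y (t u w z) - t (plyD m t x y u) w z))" by (simp add: dfs ml algebra_simps)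
  then show ?thesis using s0 by simp
qed

lemma part1: "lie_yamaguti s (plyC m) (plyLY m t)"
  unfolding lie_yamaguti_def
proof (intro conjI allI)
  show "vector_space s" by (rule vs)
  show "bilinear_wrt s (plyC m)" by (rule bilC)
  show "trilinear_wrt s (plyLY m t)" by (rule triLY)
  fix x y z w u
  show "plyC m x y = - plyC m y x" by (simp add: dfs)
  show "plyLY m t x y z = - plyLY m t y x z" by (simp add: dfs algebra_simps)
  show "plyC m (plyC m x y) z + plyC m (plyC m y z) x + plyC m (plyC m z x) y + plyLY m t x y z + plyLY m t y z x + plyLY m t z x y = 0"
    by (simp add: dfs ml algebra_simps)
  show "plyLY m t (plyC m x y) z w + plyLY m t (plyC m y z) x w + plyLY m t (plyC m z x) y w = 0" by (rule LY2)
  show "plyLY m t x y (plyC m z w) = plyC m (plyLY m t x y z) w + plyC m z (plyLY m t x y w)" by (rule LY3)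
  show "plyLY m t x y (plyLY m t z w u) = plyLY m t (plyLY m t x y z) w u + plyLY m t z (plyLY m t x y w) u + plyLY m t z w (plyLY m t x y u)" by (rule LY4)
qed

lemma repD_eq: "repD (plyC m) (\<lambda>x z. m x z) (\<lambda>x y z. t z x y) x y v = plyD m t x y v"
  by (simp add: repD_def dfs ml algebra_simps)

lemma part2: "ly_rep s (plyC m) (plyLY m t) s (\<lambda>x z. m x z) (\<lambda>x y z. t z x y)"
  unfolding ly_rep_def repD_eq
proof (intro conjI allI)
  show "vector_space s" by (rule vs)
  fix x y z w v :: 'a
  show "Vector_Spaces.linear s s (m x)" using hm1 module_hom_iff_linear by blast
  show "Vector_Spaces.linear s s (\<lambda>x. m x v)" using hm2 module_hom_iff_linear by blast
  show "Vector_Spaces.linear s s (\<lambda>z. t z x y)" using ht3 module_hom_iff_linear by blast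
  show "Vector_Spaces.linear s s (\<lambda>x. t v x y)" using ht2 module_hom_iff_linear by blast
  show "Vector_Spaces.linear s s (\<lambda>y. t v x y)" using ht1 module_hom_iff_linear by blast
  show "t v (plyC m x y) z - t (m y v) x z + t (m x v) y z = 0" by (rule ax1)
  show "t v x (plyC m y z) - m y (t v x z) + m z (t v x y) = 0" using ax2[of v x y z] by simp
  show "m (plyLY m t x y z) v = plyD m t x y (m z v) - m z (plyD m t x y v)"
    using ax5[of x y z v] by (simp add: plyLY_def ml algebra_simps)
  show "t (t v x y) z w - t (t v x z) y w - t v x (plyLY m t y z w) + plyD m t y z (t v x w) = 0"
    using ax3[of v x y z w] by (simp add: plyLY_def ml algebra_simps)
  show "t v (plyLY m t x y z) w + t v z (plyLY m t x y w) = plyD m t x y (t v z w) - t (plyD m t x y v) z w"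
    using ax4[where x=x and y=y and z=v and w=z and u=w] by (simp add: plyLY_def ml algebra_simps)
qed

lemma part3: "relative_rb s (plyC m) (plyLY m t) s (\<lambda>x z. m x z) (\<lambda>x y z. t z x y) id"
  unfolding relative_rb_def repD_eq
  by (simp add: vs module_hom_iff_linear[symmetric] module.module_hom_id[OF md] dfs)

end

theorem theorem3p11:
  fixes s :: "'k::field_char_0 \<Rightarrow> 'a::ab_group_add \<Rightarrow> 'a"
    and m :: "'a \<Rightarrow> 'a \<Rightarrow> 'a"
    and t :: "'a \<Rightarrow> 'a \<Rightarrow> 'a \<Rightarrow> 'a"
  assumes "pre_lie_yamaguti s m t"
  shows "lie_yamaguti s (plyC m) (plyLY m t)
    \<and> ly_rep s (plyC m) (plyLY m t) s (\<lambda>x z. m x z) (\<lambda>x y z. t z x y)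
    \<and> relative_rb s (plyC m) (plyLY m t) s (\<lambda>x z. m x z) (\<lambda>x y z. t z x y) id"
proof -
  interpret plyA s m t by (rule plyA.intro) (rule assms)
  show ?thesis using part1 part2 part3 by blast
qed

end
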